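(* Let $\mathcal{A}$ and $\mathcal{B}$ be subspaces of $\mathbb{C}^n$ with $\dim\mathcal{A}=a$ and $\dim\mathcal{B}=b$. Let $\{\mathbf{a}_1,\dots,\mathbf{a}_a\}$ be an orthonormal basis of $\mathcal{A}$ and $\{\mathbf{b}_1,\dots,\mathbf{b}_b\}$ an arbitrary (not necessarily orthonormal) basis of $\mathcal{B}$. Then $$\sin\{\mathcal{A},\mathcal{B}\}\le\prod_{j=1}^{\min\{a,b\}}\sin\{\mathbf{a}_j,\mathbf{b}_j\}.$$
   Context: Principal angles: for subspaces $\mathcal{A},\mathcal{B}\subseteq\mathbb{C}^n$ with $a=\dim\mathcal{A}\le\dim\mathcal{B}$, define recursively $\cos\theta_k=\max|\langle\mathbf{u},\mathbf{w}\rangle|$ over unit vectors $\mathbf{u}\in\mathcal{A}$, $\mathbf{w}\in\mathcal{B}$ orthogonal to the previously chosen maximizers $\mathbf{u}_1,\dots,\mathbf{u}_{k-1}$, resp. $\mathbf{w}_1,\dots,\mathbf{w}_{k-1}$, giving $0\le\theta_1\le\dots\le\theta_a\le\pi/2$; set $\sin\{\mathcal{A},\mathcal{B}\}=\prod_{k=1}^a\sin\theta_k$ (with the lower-dimensional subspace in the role of $\mathcal{A}$). For vectors or matrices, $\sin\{\cdot,\cdot\}$ refers to the subspaces spanned by their columns; in particular $\sin\{\mathbf{a}_j,\mathbf{b}_j\}$ is the sine of the angle between the lines spanned by $\mathbf{a}_j$ and $\mathbf{b}_j$. *)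

theory Defs
  imports "HOL-Analysis.Analysis"
begin

text \<open>Standard Hermitian inner product on complex n-space (linear in the first argument).\<close>
definition cinner :: "complex ^ 'n \<Rightarrow> complex ^ 'n \<Rightarrow> complex" where
  "cinner x y = (\<Sum>i\<in>UNIV. x $ i * cnj (y $ i))"

abbreviation csubspace :: "(complex ^ 'n) set \<Rightarrow> bool" where
  "csubspace S \<equiv> vec.subspace S"

abbreviation cdim :: "(complex ^ 'n) set \<Rightarrow> nat" where
  "cdim S \<equiv> vec.dim S"

definition principal_vectors ::
  "(complex ^ 'n) set \<Rightarrow> (complex ^ 'n) set \<Rightarrow> nat \<Rightarrow> (nat \<Rightarrow> complex ^ 'n) \<Rightarrow> (nat \<Rightarrow> complex ^ 'n) \<Rightarrow> bool" where
  "principal_vectors A B d u w \<longleftrightarrow>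
     (\<forall>k<d. u k \<in> A \<and> w k \<in> B \<and> cinner (u k) (u k) = 1 \<and> cinner (w k) (w k) = 1 \<and>
        (\<forall>j<k. cinner (u k) (u j) = 0 \<and> cinner (w k) (w j) = 0) \<and>
        (\<forall>x y. x \<in> A \<and> y \<in> B \<and> cinner x x = 1 \<and> cinner y y = 1 \<and>
               (\<forall>j<k. cinner x (u j) = 0 \<and> cinner y (w j) = 0)
               \<longrightarrow> cmod (cinner x y) \<le> cmod (cinner (u k) (w k))))"

text \<open>Product of sines of the principal angles, A in the role of the lower-dimensional space:
  cos theta_k = |<u_k, w_k>|, theta_k in [0, pi/2].\<close>
definition sin_prod_aux :: "(complex ^ 'n) set \<Rightarrow> (complex ^ 'n) set \<Rightarrow> real" where
  "sin_prod_aux A B =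
     (let d = cdim A;
          uw = (SOME uw. principal_vectors A B d (fst uw) (snd uw))
      in \<Prod>k<d. sin (arccos (cmod (cinner (fst uw k) (snd uw k)))))"

definition sin_subspaces :: "(complex ^ 'n) set \<Rightarrow> (complex ^ 'n) set \<Rightarrow> real" where
  "sin_subspaces A B = (if cdim A \<le> cdim B then sin_prod_aux A B else sin_prod_aux B A)"

definition sin_vec :: "complex ^ 'n \<Rightarrow> complex ^ 'n \<Rightarrow> real" where
  "sin_vec x y = sin_subspaces (vec.span {x}) (vec.span {y})"

end

theory Submission
  imports Defs
begin


lemma cinner_add_left: "cinner (x + y) z = cinner x z + cinner y z"
  by (simp add: cinner_def distrib_right sum.distrib)
lemma cinner_add_right: "cinner x (y + z) = cinner x y + cinner x z"
  by (simp add: cinner_def distrib_left sum.distrib)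
lemma cinner_diff_left: "cinner (x - y) z = cinner x z - cinner y z"
  by (simp add: cinner_def left_diff_distrib sum_subtractf)
lemma cinner_diff_right: "cinner x (y - z) = cinner x y - cinner x z"
  by (simp add: cinner_def right_diff_distrib sum_subtractf)
lemma cinner_scale_left: "cinner (c *s x) y = c * cinner x y"
  by (simp add: cinner_def sum_distrib_left mult.assoc)
lemma cinner_scale_right: "cinner x (c *s y) = cnj c * cinner x y"
  by (simp add: cinner_def sum_distrib_left mult_ac)
lemma cinner_zero_left[simp]: "cinner 0 y = 0" by (simp add: cinner_def)
lemma cinner_zero_right[simp]: "cinner x 0 = 0" by (simp add: cinner_def)
lemma cinner_commute: "cinner y x = cnj (cinner x y)"
  by (simp add: cinner_def mult.commute)
lemma cinner_sum_left: "cinner (\<Sum>i\<in>I. f i) z = (\<Sum>i\<in>I. cinner (f i) z)"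
  by (induction I rule: infinite_finite_induct) (auto simp: cinner_add_left)
lemma cinner_sum_right: "cinner z (\<Sum>i\<in>I. f i) = (\<Sum>i\<in>I. cinner z (f i))"
  by (induction I rule: infinite_finite_induct) (auto simp: cinner_add_right)
lemma cinner_neg_left: "cinner (- x) y = - cinner x y"
  by (simp add: cinner_def sum_negf)

lemma re_cinner: "Re (cinner x y) = inner x y"
  by (simp add: cinner_def inner_vec_def inner_complex_def Re_sum)

lemma cinner_self: "cinner x x = complex_of_real ((norm x)^2)"
proof -
  have "cinner x x = (\<Sum>i\<in>UNIV. complex_of_real ((cmod (x$i))^2))"
    unfolding cinner_def by (rule sum.cong) (auto simp: complex_norm_square[symmetric] simp del: of_real_power)
  also have "\<dots> = complex_of_real ((norm x)^2)"
    by (simp add: norm_vec_def L2_set_def sum_nonneg del: of_real_power)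
  finally show ?thesis .
qed

lemma scaleR_vec_eq: "(r::real) *\<^sub>R (x::complex^'n) = complex_of_real r *s x"
  by (vector scaleR_conv_of_real)

lemma csubspace_subspace: "csubspace S \<Longrightarrow> subspace S"
  unfolding subspace_def vec.subspace_def by (simp add: scaleR_vec_eq)

lemma norm_scale: "norm (c *s (x::complex^'n)) = cmod c * norm x"
proof -
  have "(norm (c *s x))^2 = (cmod c * norm x)^2"
  proof -
    have "complex_of_real ((norm (c *s x))^2) = complex_of_real ((cmod c * norm x)^2)"
      unfolding cinner_self[symmetric] cinner_scale_left cinner_scale_right
      by (simp add: cinner_self power_mult_distrib complex_norm_square[symmetric] mult_ac del: of_real_power)
    then show ?thesis using of_real_eq_iff by blast
  qed
  then show ?thesis by (simp add: power2_eq_imp_eq)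
qed

lemma cauchy_schwarz: "cmod (cinner x y) \<le> norm x * norm y"
proof (cases "cinner x y = 0")
  case True then show ?thesis by simp
next
  case False
  define c where "c = cinner x y / cmod (cinner x y)"
  have cn: "cmod c = 1" using False by (simp add: c_def norm_divide)
  have "cmod (cinner x y) = Re (cinner x (c *s y))"
  proof -
    have "cnj c * cinner x y = cnj (cinner x y) * cinner x y / cmod (cinner x y)"
      by (simp add: c_def)
    also have "\<dots> = complex_of_real (cmod (cinner x y))"
      using False by (simp add: complex_norm_square[symmetric] mult.commute power2_eq_square del: of_real_power)
    finally show ?thesis by (simp add: cinner_scale_right)
  qed
  also have "\<dots> = inner x (c *s y)" by (rule re_cinner)
  also have "\<dots> \<le> norm x * norm (c *s y)" by (rule norm_cauchy_schwarz)
  also have "\<dots> = norm x * norm y" by (simp add: norm_scale cn)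
  finally show ?thesis .
qed

lemma cmod_cinner_commute: "cmod (cinner x y) = cmod (cinner y x)"
  by (subst cinner_commute) (rule complex_mod_cnj)



definition ON :: "nat \<Rightarrow> (nat \<Rightarrow> complex^'n) \<Rightarrow> bool" where
  "ON d u \<longleftrightarrow> (\<forall>i<d. \<forall>j<d. cinner (u i) (u j) = (if i = j then 1 else 0))"

lemma cinner_span_zero:
  assumes "y \<in> vec.span S" "\<And>s. s \<in> S \<Longrightarrow> cinner x s = 0"
  shows "cinner x y = 0"
  using assms(1)
proof (induction rule: vec.span_induct)
  case base
  show ?case unfolding vec.subspace_def
    by (auto simp: cinner_add_right cinner_scale_right)
next
  case (step s) then show ?case using assms(2) by simp
qed

lemma cinner_span_zero_left:
  assumes "y \<in> vec.span S" "\<And>s. s \<in> S \<Longrightarrow> cinner s x = 0"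
  shows "cinner y x = 0"
proof -
  have "cinner x y = 0"
    by (rule cinner_span_zero[OF assms(1)]) (metis assms(2) cinner_commute complex_cnj_zero)
  then show ?thesis by (metis cinner_commute complex_cnj_zero)
qed

lemma cinner_self_zero: "cinner x x = 0 \<Longrightarrow> x = 0"
  by (simp add: cinner_self)

lemma ON_independent:
  assumes "ON d u"
  shows "vec.independent (u ` {..<d}) \<and> inj_on u {..<d}"
proof
  show inj: "inj_on u {..<d}"
  proof (rule inj_onI)
    fix i j assume "i \<in> {..<d}" "j \<in> {..<d}" "u i = u j"
    then show "i = j" using assms unfolding ON_def
      by (metis (no_types, lifting) lessThan_iff zero_neq_one)
  qed
  show "vec.independent (u ` {..<d})"
    unfolding vec.independent_explicit
  proof (intro conjI allI impI ballI)
    fix c v assume h: "(\<Sum>v\<in>u ` {..<d}. c v *s v) = 0" and v: "v \<in> u ` {..<d}"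
    then obtain i where i: "i < d" "v = u i" by auto
    have "0 = cinner (\<Sum>v\<in>u ` {..<d}. c v *s v) v" using h by simp
    also have "\<dots> = (\<Sum>w\<in>u ` {..<d}. c w * cinner w v)"
      by (simp add: cinner_sum_left cinner_scale_left)
    also have "\<dots> = (\<Sum>w\<in>{v}. c w * cinner w v)"
    proof (rule sum.mono_neutral_right)
      show "\<forall>w\<in>u ` {..<d} - {v}. c w * cinner w v = 0"
      proof
        fix w assume "w \<in> u ` {..<d} - {v}"
        then obtain x where "x < d" "w = u x" "x \<noteq> i" using i by auto
        then show "c w * cinner w v = 0" using assms i unfolding ON_def by auto
      qed
    qed (use v in auto)
    also have "\<dots> = c v" using assms i unfolding ON_def by auto
    finally show "c v = 0" by simp
  qed simp
qed

lemma ON_spans: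
  assumes "ON d u" "\<forall>i<d. u i \<in> X" "cdim X \<le> d"
  shows "X \<subseteq> vec.span (u ` {..<d})"
proof (rule vec.card_ge_dim_independent)
  show "u ` {..<d} \<subseteq> X" using assms by auto
  show "vec.independent (u ` {..<d})" using ON_independent[OF assms(1)] by blast
  show "cdim X \<le> card (u ` {..<d})"
    using ON_independent[OF assms(1)] assms(3) by (simp add: card_image)
qed

lemma exists_orth_unit:
  assumes X: "csubspace X" and on: "ON d u" and uX: "\<forall>i<d. u i \<in> X" and dl: "d < cdim X"
  shows "\<exists>x\<in>X. cinner x x = 1 \<and> (\<forall>j<d. cinner x (u j) = 0)"
proof -
  have "\<not> X \<subseteq> vec.span (u ` {..<d})"
  proof
    assume "X \<subseteq> vec.span (u ` {..<d})"
    then have "cdim X \<le> card (u ` {..<d})" by (simp add: vec.dim_le_card)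
    also have "\<dots> \<le> d" using card_image_le[of "{..<d}" u] by simp
    finally show False using dl by simp
  qed
  then obtain v where v: "v \<in> X" "v \<notin> vec.span (u ` {..<d})" by auto
  define e where "e = v - (\<Sum>j<d. cinner v (u j) *s u j)"
  have eX: "e \<in> X" unfolding e_def
    by (intro vec.subspace_diff[OF X] v vec.subspace_sum[OF X] vec.subspace_scale[OF X]) (use uX in auto)
  have eo: "cinner e (u i) = 0" if i: "i < d" for i
  proof -
    have "cinner (\<Sum>j<d. cinner v (u j) *s u j) (u i) = (\<Sum>j<d. cinner v (u j) * cinner (u j) (u i))"
      by (simp add: cinner_sum_left cinner_scale_left)
    also have "\<dots> = (\<Sum>j\<in>{i}. cinner v (u j) * cinner (u j) (u i))"
      by (rule sum.mono_neutral_right) (use on i in \<open>auto simp: ON_def\<close>)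
    also have "\<dots> = cinner v (u i)" using on i by (simp add: ON_def)
    finally show ?thesis unfolding e_def by (simp add: cinner_diff_left)
  qed
  have "e \<noteq> 0"
  proof
    assume "e = 0"
    then have "v = (\<Sum>j<d. cinner v (u j) *s u j)" unfolding e_def by simp
    also have "\<dots> \<in> vec.span (u ` {..<d})"
      by (intro vec.span_sum vec.span_scale vec.span_base) auto
    finally show False using v by simp
  qed
  then have np: "norm e > 0" by simp
  define x where "x = complex_of_real (1 / norm e) *s e"
  have "x \<in> X" unfolding x_def by (rule vec.subspace_scale[OF X eX])
  moreover have "cinner x x = 1"
  proof -
    have "cinner x x = complex_of_real (1 / norm e) * complex_of_real (1 / norm e) * cinner e e"
      unfolding x_def cinner_scale_left cinner_scale_right by simp
    also have "\<dots> = 1" using np by (simp only: cinner_self) (simp add: power2_eq_square flip: of_real_mult)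
    finally show ?thesis .
  qed
  moreover have "\<forall>j<d. cinner x (u j) = 0" unfolding x_def by (simp add: cinner_scale_left eo)
  ultimately show ?thesis by blast
qed

lemma unit_norm: "cinner x x = 1 \<Longrightarrow> norm x = 1"
proof -
  assume "cinner x x = 1"
  then have "(norm x)^2 = 1" using cinner_self[of x] by (metis of_real_eq_1_iff)
  then show "norm x = 1" using norm_ge_zero[of x] by (auto simp: power2_eq_1_iff)
qed

lemma continuous_cinner[continuous_intros]:
  "continuous_on S f \<Longrightarrow> continuous_on S g \<Longrightarrow> continuous_on S (\<lambda>x. cinner (f x) (g x))"
  unfolding cinner_def by (intro continuous_intros)

lemma closed_orth_unit:
  assumes "csubspace X"
  shows "compact {x\<in>X. cinner x x = 1 \<and> (\<forall>j<d. cinner x (u j) = 0)}" (is "compact ?S")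
proof -
  have cX: "closed X" using closed_subspace csubspace_subspace assms by blast
  have eq: "?S = X \<inter> {x. cinner x x = 1} \<inter> (\<Inter>j\<in>{..<d}. {x. cinner x (u j) = 0})" by blast
  have c1: "closed {x. cinner x x = 1}"
    by (rule closed_Collect_eq) (intro continuous_intros)+
  have c2: "closed {x. cinner x (u j) = 0}" for j
    by (rule closed_Collect_eq) (intro continuous_intros)+
  have c3: "closed (\<Inter>j\<in>{..<d}. {x. cinner x (u j) = 0})"
    using c2 by (intro closed_INT ballI)
  have "closed (X \<inter> {x. cinner x x = 1} \<inter> (\<Inter>j\<in>{..<d}. {x. cinner x (u j) = 0}))"
    by (rule closed_Int[OF closed_Int[OF cX c1] c3])
  then have "closed ?S" by (simp only: eq)
  moreover have "bounded ?S"
  proof -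
    have "?S \<subseteq> cball 0 1"
    proof
      fix x assume "x \<in> ?S"
      then have "cinner x x = 1" by blast
      then have "norm x = 1" by (rule unit_norm)
      then show "x \<in> cball 0 1" by simp
    qed
    then show ?thesis using bounded_cball bounded_subset by blast
  qed
  ultimately show ?thesis by (simp add: compact_eq_bounded_closed)
qed



lemma pv_ON:
  assumes "principal_vectors A B d u w"
  shows "ON d u" "ON d w"
proof -
  have h: "\<forall>k<d. cinner (u k) (u k) = 1 \<and> cinner (w k) (w k) = 1 \<and>
        (\<forall>j<k. cinner (u k) (u j) = 0 \<and> cinner (w k) (w j) = 0)"
    using assms unfolding principal_vectors_def by blast
  show "ON d u" unfolding ON_def
  proof (intro allI impI)
    fix i j assume "i < d" "j < d"
    then show "cinner (u i) (u j) = (if i = j then 1 else 0)"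
      using h by (cases i j rule: linorder_cases) (auto, metis cinner_commute complex_cnj_zero)
  qed
  show "ON d w" unfolding ON_def
  proof (intro allI impI)
    fix i j assume "i < d" "j < d"
    then show "cinner (w i) (w j) = (if i = j then 1 else 0)"
      using h by (cases i j rule: linorder_cases) (auto, metis cinner_commute complex_cnj_zero)
  qed
qed

lemma pv_swap:
  assumes "principal_vectors A B d u w"
  shows "principal_vectors B A d w u"
  unfolding principal_vectors_def
proof (intro allI impI)
  fix k assume k: "k < d"
  have h: "u k \<in> A \<and> w k \<in> B \<and> cinner (u k) (u k) = 1 \<and> cinner (w k) (w k) = 1 \<and>
        (\<forall>j<k. cinner (u k) (u j) = 0 \<and> cinner (w k) (w j) = 0) \<and>
        (\<forall>x y. x \<in> A \<and> y \<in> B \<and> cinner x x = 1 \<and> cinner y y = 1 \<and>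
               (\<forall>j<k. cinner x (u j) = 0 \<and> cinner y (w j) = 0)
               \<longrightarrow> cmod (cinner x y) \<le> cmod (cinner (u k) (w k)))"
    using assms k unfolding principal_vectors_def by blast
  show "w k \<in> B \<and> u k \<in> A \<and> cinner (w k) (w k) = 1 \<and> cinner (u k) (u k) = 1 \<and>
        (\<forall>j<k. cinner (w k) (w j) = 0 \<and> cinner (u k) (u j) = 0) \<and>
        (\<forall>x y. x \<in> B \<and> y \<in> A \<and> cinner x x = 1 \<and> cinner y y = 1 \<and>
               (\<forall>j<k. cinner x (w j) = 0 \<and> cinner y (u j) = 0)
               \<longrightarrow> cmod (cinner x y) \<le> cmod (cinner (w k) (u k)))"
  proof (intro conjI allI impI)
    fix x y assume xy: "x \<in> B \<and> y \<in> A \<and> cinner x x = 1 \<and> cinner y y = 1 \<and>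
               (\<forall>j<k. cinner x (w j) = 0 \<and> cinner y (u j) = 0)"
    then have "cmod (cinner y x) \<le> cmod (cinner (u k) (w k))" using h by blast
    then show "cmod (cinner x y) \<le> cmod (cinner (w k) (u k))"
      by (simp only: cmod_cinner_commute[of x y] cmod_cinner_commute[of "w k" "u k"])
  qed (use h in blast)+
qed

lemma pv_exists:
  assumes X: "csubspace X" and Y: "csubspace Y"
  shows "d \<le> cdim X \<Longrightarrow> d \<le> cdim Y \<Longrightarrow> \<exists>u w. principal_vectors X Y d u w"
proof (induction d)
  case 0
  then show ?case by (simp add: principal_vectors_def)
next
  case (Suc d)
  then obtain u w where pv: "principal_vectors X Y d u w" by auto
  have uX: "\<forall>i<d. u i \<in> X" and wY: "\<forall>i<d. w i \<in> Y" using pv unfolding principal_vectors_def by auto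
  define S where "S = {x\<in>X. cinner x x = 1 \<and> (\<forall>j<d. cinner x (u j) = 0)}"
  define T where "T = {y\<in>Y. cinner y y = 1 \<and> (\<forall>j<d. cinner y (w j) = 0)}"
  have "S \<noteq> {}" unfolding S_def using exists_orth_unit[OF X pv_ON(1)[OF pv] uX] Suc.prems by auto
  moreover have "T \<noteq> {}" unfolding T_def using exists_orth_unit[OF Y pv_ON(2)[OF pv] wY] Suc.prems by auto
  ultimately have ne: "S \<times> T \<noteq> {}" by simp
  have cpt: "compact (S \<times> T)" unfolding S_def T_def
    by (intro compact_Times closed_orth_unit X Y)
  have "continuous_on (S \<times> T) (\<lambda>p. cmod (cinner (fst p) (snd p)))"
    by (intro continuous_intros)
  from continuous_attains_sup[OF cpt ne this] obtain p where
    p: "p \<in> S \<times> T" "\<forall>q\<in>S \<times> T. cmod (cinner (fst q) (snd q)) \<le> cmod (cinner (fst p) (snd p))"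
    by blast
  define u' where "u' = u(d := fst p)"
  define w' where "w' = w(d := snd p)"
  have "principal_vectors X Y (Suc d) u' w'"
    unfolding principal_vectors_def
  proof (intro allI impI)
    fix k assume k: "k < Suc d"
    show "u' k \<in> X \<and> w' k \<in> Y \<and> cinner (u' k) (u' k) = 1 \<and> cinner (w' k) (w' k) = 1 \<and>
        (\<forall>j<k. cinner (u' k) (u' j) = 0 \<and> cinner (w' k) (w' j) = 0) \<and>
        (\<forall>x y. x \<in> X \<and> y \<in> Y \<and> cinner x x = 1 \<and> cinner y y = 1 \<and>
               (\<forall>j<k. cinner x (u' j) = 0 \<and> cinner y (w' j) = 0)
               \<longrightarrow> cmod (cinner x y) \<le> cmod (cinner (u' k) (w' k)))"
    proof (cases "k = d")
      case True
      have eqs: "\<forall>j<k. u' j = u j \<and> w' j = w j" using True by (simp add: u'_def w'_def)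
      have "u' k = fst p" "w' k = snd p" using True by (simp_all add: u'_def w'_def)
      then show ?thesis using p eqs True unfolding S_def T_def
        by (auto simp: mem_Times_iff)
    next
      case False
      then have kd: "k < d" using k by simp
      have eqs: "\<forall>j\<le>k. u' j = u j \<and> w' j = w j" using kd by (simp add: u'_def w'_def)
      have "u k \<in> X \<and> w k \<in> Y \<and> cinner (u k) (u k) = 1 \<and> cinner (w k) (w k) = 1 \<and>
        (\<forall>j<k. cinner (u k) (u j) = 0 \<and> cinner (w k) (w j) = 0) \<and>
        (\<forall>x y. x \<in> X \<and> y \<in> Y \<and> cinner x x = 1 \<and> cinner y y = 1 \<and>
               (\<forall>j<k. cinner x (u j) = 0 \<and> cinner y (w j) = 0)
               \<longrightarrow> cmod (cinner x y) \<le> cmod (cinner (u k) (w k)))"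
        using pv kd unfolding principal_vectors_def by blast
      then show ?thesis using eqs by simp
    qed
  qed
  then show ?case by blast
qed



lemma cmod_mult_self: "complex_of_real (cmod z) * complex_of_real (cmod z) = z * cnj z"
  by (metis complex_norm_square of_real_mult power2_eq_square)

lemma pv_maxsq:
  assumes pv: "principal_vectors P Q d p q" and Q: "csubspace Q" and k: "k < d"
    and x: "x \<in> P" "cinner x x = 1" "\<forall>j<k. cinner x (p j) = 0"
    and v: "v \<in> Q" "\<forall>j<k. cinner v (q j) = 0"
  shows "cmod (cinner x v) \<le> cmod (cinner (p k) (q k)) * norm v"
proof (cases "v = 0")
  case True then show ?thesis by simp
next
  case False
  then have np: "norm v > 0" by simp
  define y where "y = complex_of_real (1 / norm v) *s v"
  have "y \<in> Q" unfolding y_def by (rule vec.subspace_scale[OF Q v(1)])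
  moreover have "cinner y y = 1"
  proof -
    have "cinner y y = complex_of_real (1 / norm v) * complex_of_real (1 / norm v) * cinner v v"
      unfolding y_def cinner_scale_left cinner_scale_right by simp
    also have "\<dots> = 1" using np by (simp only: cinner_self) (simp add: power2_eq_square flip: of_real_mult)
    finally show ?thesis .
  qed
  moreover have "\<forall>j<k. cinner y (q j) = 0" using v by (simp add: y_def cinner_scale_left)
  ultimately have "cmod (cinner x y) \<le> cmod (cinner (p k) (q k))"
    using pv k x unfolding principal_vectors_def by blast
  moreover have "cinner x y = complex_of_real (1 / norm v) * cinner x v"
    by (simp add: y_def cinner_scale_right)
  ultimately have "cmod (cinner x v) / norm v \<le> cmod (cinner (p k) (q k))"
    by (simp add: norm_divide)
  then show ?thesis using np by (simp add: divide_le_eq)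
qed

lemma pv_props:
  assumes "principal_vectors P Q d p q" "k < d"
  shows "p k \<in> P" "q k \<in> Q" "cinner (p k) (p k) = 1" "cinner (q k) (q k) = 1"
    "\<forall>j<k. cinner (p k) (p j) = 0" "\<forall>j<k. cinner (q k) (q j) = 0"
  using assms unfolding principal_vectors_def by blast+

lemma S1:
  assumes pv: "principal_vectors P Q d p q" and Q: "csubspace Q" and k: "k < d"
    and z: "z \<in> Q" "\<forall>j<k. cinner z (q j) = 0" "cinner z (q k) = 0"
  shows "cinner (p k) z = 0"
proof (rule ccontr)
  assume tn: "cinner (p k) z \<noteq> 0"
  define t where "t = cinner (p k) z"
  define c where "c = cinner (p k) (q k)"
  note pp = pv_props[OF pv k]
  have px: "p k \<in> P" "cinner (p k) (p k) = 1" "\<forall>j<k. cinner (p k) (p j) = 0" using pp by auto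
  show False
  proof (cases "c = 0")
    case True
    have "cmod t \<le> cmod c * norm z" unfolding t_def c_def
      by (rule pv_maxsq[OF pv Q k px z(1,2)])
    then show False using True tn t_def by simp
  next
    case False
    define K where "K = (norm z)^2"
    define T where "T = (cmod t)^2"
    define C where "C = (cmod c)^2"
    have Tp: "T > 0" using tn t_def T_def by simp
    have Cp: "C > 0" using False C_def by simp
    have Kn: "K \<ge> 0" using K_def by simp
    define \<eta> where "\<eta> = 1 / (1 + C * K)"
    have ep: "\<eta> > 0" using Cp Kn \<eta>_def by (simp add: add_pos_nonneg)
    have eCK: "\<eta> * (C * K) < 1" using Cp Kn by (simp add: \<eta>_def divide_less_eq add_pos_nonneg)
    define \<epsilon> where "\<epsilon> = complex_of_real \<eta> * cnj c * t"
    define v where "v = q k + \<epsilon> *s z"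
    have vQ: "v \<in> Q" unfolding v_def using pp(2) z(1) Q
      by (intro vec.subspace_add[OF Q] vec.subspace_scale[OF Q]) auto
    have vo: "\<forall>j<k. cinner v (q j) = 0" using pp(6) z(2)
      by (simp add: v_def cinner_add_left cinner_scale_left)
    have cv: "cinner (p k) v = c * (1 + complex_of_real (\<eta> * T))"
    proof -
      have "cinner (p k) v = c + cnj \<epsilon> * t"
        by (simp add: v_def cinner_add_right cinner_scale_right c_def t_def)
      also have "cnj \<epsilon> * t = c * complex_of_real (\<eta> * T)"
        by (simp add: \<epsilon>_def T_def complex_norm_square[symmetric] mult_ac del: of_real_power)
      finally show ?thesis by (simp add: algebra_simps)
    qed
    have qz: "cinner (q k) z = 0" using z(3) by (metis cinner_commute complex_cnj_zero)
    have vv: "cinner v v = complex_of_real (1 + \<eta>^2 * C * T * K)"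
    proof -
      have "cinner v v = cinner (q k) (q k) + cnj \<epsilon> * cinner (q k) z + \<epsilon> * cinner z (q k)
            + \<epsilon> * cnj \<epsilon> * cinner z z"
        by (simp add: v_def cinner_add_left cinner_add_right cinner_scale_left cinner_scale_right algebra_simps)
      also have "\<dots> = 1 + \<epsilon> * cnj \<epsilon> * complex_of_real K"
        using pp(4) qz z(3) by (simp add: cinner_self K_def)
      also have "\<epsilon> * cnj \<epsilon> = complex_of_real (\<eta>^2 * C * T)"
        by (simp add: \<epsilon>_def C_def T_def power2_eq_square cmod_mult_self mult_ac del: of_real_power)
      finally show ?thesis by simp
    qed
    have nv: "(norm v)^2 = 1 + \<eta>^2 * C * T * K"
      using vv cinner_self[of v] of_real_eq_iff by metis
    have "cmod (cinner (p k) v) \<le> cmod c * norm v" unfolding c_def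
      by (rule pv_maxsq[OF pv Q k px vQ vo])
    moreover have "cmod (1 + complex_of_real (\<eta> * T)) = 1 + \<eta> * T"
      by (metis ep Tp norm_of_real of_real_1 of_real_add abs_of_pos add_pos_pos mult_pos_pos zero_less_one)
    ultimately have "cmod c * (1 + \<eta> * T) \<le> cmod c * norm v"
      using cv by (simp only: norm_mult)
    then have "1 + \<eta> * T \<le> norm v" using False by simp
    then have "(1 + \<eta> * T)^2 \<le> (norm v)^2"
      using ep Tp by (intro power_mono) auto
    then have "(1 + \<eta> * T)^2 \<le> 1 + \<eta>^2 * C * T * K" using nv by simp
    then have "\<eta> * T * (2 + \<eta> * T) \<le> \<eta> * T * (\<eta> * (C * K))"
      by (simp add: power2_eq_square algebra_simps)
    then have "2 + \<eta> * T \<le> \<eta> * (C * K)" using ep Tp by simp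
    moreover have "\<eta> * T > 0" using ep Tp by simp
    ultimately show False using eCK by linarith
  qed
qed



lemma cz_sym: "cinner x y = 0 \<Longrightarrow> cinner y x = 0"
  by (metis cinner_commute complex_cnj_zero)

lemma Sgen_Q:
  assumes pv: "principal_vectors P Q d p q" and Q: "csubspace Q" and k: "k < d"
    and y: "y \<in> Q" "\<forall>j<k. cinner y (q j) = 0"
  shows "cinner (p k) y = cinner (p k) (q k) * cinner (q k) y"
proof -
  note pp = pv_props[OF pv k]
  define z where "z = y - cinner y (q k) *s q k"
  have "z \<in> Q" unfolding z_def using pp(2) y(1)
    by (intro vec.subspace_diff[OF Q] vec.subspace_scale[OF Q]) auto
  moreover have "\<forall>j<k. cinner z (q j) = 0"
    using y(2) pp(6) by (simp add: z_def cinner_diff_left cinner_scale_left)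
  moreover have "cinner z (q k) = 0"
    using pp(4) by (simp add: z_def cinner_diff_left cinner_scale_left)
  ultimately have "cinner (p k) z = 0" by (rule S1[OF pv Q k])
  then show ?thesis
    by (simp add: z_def cinner_diff_right cinner_scale_right cinner_commute[of y "q k"] mult.commute)
qed

lemma Sgen_P:
  assumes pv: "principal_vectors P Q d p q" and P: "csubspace P" and k: "k < d"
    and x: "x \<in> P" "\<forall>j<k. cinner x (p j) = 0"
  shows "cinner x (q k) = cinner x (p k) * cinner (p k) (q k)"
proof -
  have "cinner (q k) x = cinner (q k) (p k) * cinner (p k) x"
    by (rule Sgen_Q[OF pv_swap[OF pv] P k x])
  then have "cnj (cinner (q k) x) = cnj (cinner (q k) (p k) * cinner (p k) x)" by simp
  then show ?thesis by (simp add: cinner_commute[of "q k" x] cinner_commute[of "q k" "p k"] cinner_commute[of "p k" x] mult.commute)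
qed

lemma cross0:
  assumes pv: "principal_vectors P Q d p q" and P: "csubspace P" and Q: "csubspace Q"
    and i: "i < d" and k: "k < d" and ne: "i \<noteq> k"
  shows "cinner (p i) (q k) = 0"
proof (cases "k < i")
  case True
  have "cinner (p i) (q k) = cinner (p i) (p k) * cinner (p k) (q k)"
    using Sgen_P[OF pv P k, of "p i"] pv_props[OF pv i] True by auto
  then show ?thesis using pv_props(5)[OF pv i] True by simp
next
  case False
  then have ik: "i < k" using ne by simp
  have "cinner (p i) (q k) = cinner (p i) (q i) * cinner (q i) (q k)"
    using Sgen_Q[OF pv Q i, of "q k"] pv_props[OF pv k] ik by auto
  then show ?thesis using pv_props(6)[OF pv k] ik cz_sym by auto
qed

definition res :: "(nat \<Rightarrow> complex^'n) \<Rightarrow> (nat \<Rightarrow> complex^'n) \<Rightarrow> nat \<Rightarrow> complex^'n" where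
  "res p q k = p k - cinner (p k) (q k) *s q k"

lemma res_orth_Q:
  assumes pv: "principal_vectors P Q d p q" and P: "csubspace P" and Q: "csubspace Q"
    and k: "k < d" and y: "y \<in> Q"
  shows "cinner (res p q k) y = 0"
proof -
  note pp = pv_props[OF pv k]
  have onq: "ON d q" using pv_ON[OF pv] by blast
  define y' where "y' = y - (\<Sum>j<k. cinner y (q j) *s q j)"
  have y'Q: "y' \<in> Q" unfolding y'_def
    by (intro vec.subspace_diff[OF Q] y vec.subspace_sum[OF Q] vec.subspace_scale[OF Q])
       (use pv_props(2)[OF pv] k in auto)
  have y'o: "\<forall>i<k. cinner y' (q i) = 0"
  proof (intro allI impI)
    fix i assume i: "i < k"
    have "cinner (\<Sum>j<k. cinner y (q j) *s q j) (q i) = (\<Sum>j<k. cinner y (q j) * cinner (q j) (q i))"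
      by (simp add: cinner_sum_left cinner_scale_left)
    also have "\<dots> = (\<Sum>j\<in>{i}. cinner y (q j) * cinner (q j) (q i))"
      by (rule sum.mono_neutral_right) (use onq i k in \<open>auto simp: ON_def\<close>)
    also have "\<dots> = cinner y (q i)" using onq i k by (simp add: ON_def)
    finally show "cinner y' (q i) = 0" by (simp add: y'_def cinner_diff_left)
  qed
  have a: "cinner (res p q k) y' = 0"
    using Sgen_Q[OF pv Q k y'Q y'o] by (simp add: res_def cinner_diff_left cinner_scale_left)
  have b: "cinner (res p q k) (q j) = 0" if j: "j < k" for j
    using cross0[OF pv P Q k _, of j] j k pp(6)
    by (simp add: res_def cinner_diff_left cinner_scale_left)
  have yy: "y' + (\<Sum>j<k. cinner y (q j) *s q j) = y" by (simp add: y'_def)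
  have "cinner (res p q k) (y' + (\<Sum>j<k. cinner y (q j) *s q j)) = cinner (res p q k) y' + (\<Sum>j<k. cnj (cinner y (q j)) * cinner (res p q k) (q j))"
    by (simp add: cinner_add_right cinner_sum_right cinner_scale_right)
  then show ?thesis using a b yy by simp
qed

lemma res_orth:
  assumes pv: "principal_vectors P Q d p q" and P: "csubspace P" and Q: "csubspace Q"
    and k: "k < d" and l: "l < d" and ne: "k \<noteq> l"
  shows "cinner (res p q k) (res p q l) = 0"
proof -
  have "cinner (res p q k) (res p q l) = cinner (res p q k) (p l)"
    using res_orth_Q[OF pv P Q k pv_props(2)[OF pv l]]
    by (simp add: res_def[of p q l] cinner_diff_right cinner_scale_right)
  also have "\<dots> = cinner (p k) (p l) - cinner (p k) (q k) * cinner (q k) (p l)"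
    by (simp add: res_def cinner_diff_left cinner_scale_left)
  also have "cinner (q k) (p l) = 0" using cross0[OF pv P Q l k] ne cz_sym by auto
  also have "cinner (p k) (p l) = 0" using pv_ON(1)[OF pv] k l ne by (simp add: ON_def)
  finally show ?thesis by simp
qed

lemma res_norm:
  assumes pv: "principal_vectors P Q d p q" and P: "csubspace P" and Q: "csubspace Q" and k: "k < d"
  shows "cinner (res p q k) (res p q k) = 1 - cinner (p k) (q k) * cnj (cinner (p k) (q k))"
proof -
  have "cinner (res p q k) (res p q k) = cinner (res p q k) (p k)"
    using res_orth_Q[OF pv P Q k pv_props(2)[OF pv k]]
    by (simp add: res_def[of p q k] cinner_diff_right cinner_scale_right)
  also have "\<dots> = cinner (p k) (p k) - cinner (p k) (q k) * cinner (q k) (p k)"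
    by (simp add: res_def cinner_diff_left cinner_scale_left)
  finally show ?thesis using pv_props(3)[OF pv k] by (simp add: cinner_commute[of "q k" "p k"])
qed

lemma perp_P_perp_Q:
  assumes pv: "principal_vectors P Q d p q" and P: "csubspace P" and Q: "csubspace Q"
    and dd: "cdim P \<le> d \<or> cdim Q \<le> d"
    and x: "x \<in> P" "\<forall>k<d. cinner x (p k) = 0" and y: "y \<in> Q"
  shows "cinner x y = 0"
  using dd
proof
  assume "cdim P \<le> d"
  then have "P \<subseteq> vec.span (p ` {..<d})"
    using ON_spans[OF pv_ON(1)[OF pv]] pv_props(1)[OF pv] by blast
  then have "cinner x x = 0" using x by (intro cinner_span_zero[of x]) auto
  then have "x = 0" by (rule cinner_self_zero)
  then show ?thesis by simp
next
  assume "cdim Q \<le> d"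
  then have "Q \<subseteq> vec.span (q ` {..<d})"
    using ON_spans[OF pv_ON(2)[OF pv]] pv_props(2)[OF pv] by blast
  moreover have "cinner x (q k) = 0" if "k < d" for k
    using Sgen_P[OF pv P that x(1)] x(2) that by simp
  ultimately show ?thesis using y by (intro cinner_span_zero[of y]) auto
qed



lemma row_pos:
  fixes x :: "nat \<Rightarrow> real"
  assumes x: "\<forall>k<d. 0 < x k \<and> x k \<le> 1" and B: "\<forall>k<d. 0 \<le> B k" and s: "(\<Sum>k<d. B k) \<le> 1"
  shows "(\<Sum>k<d. B k * x k) + (1 - (\<Sum>k<d. B k)) > 0"
proof (cases "\<forall>k<d. B k = 0")
  case True then show ?thesis by simp
next
  case False
  then obtain k0 where k0: "k0 < d" "B k0 \<noteq> 0" by auto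
  have "(\<Sum>k<d. B k * (1 - x k)) < (\<Sum>k<d. B k)"
  proof (rule sum_strict_mono_ex1)
    show "\<forall>k\<in>{..<d}. B k * (1 - x k) \<le> B k" using x B by (auto simp: mult_le_cancel_left1 algebra_simps)
    show "\<exists>k\<in>{..<d}. B k * (1 - x k) < B k" using k0 x B
      by (intro bexI[of _ k0]) (auto simp: algebra_simps less_le)
  qed simp
  then show ?thesis using s by (simp add: algebra_simps sum_subtractf sum_distrib_left right_diff_distrib)
qed

lemma row_ln:
  fixes x :: "nat \<Rightarrow> real"
  assumes x: "\<forall>k<d. 0 < x k \<and> x k \<le> 1" and B: "\<forall>k<d. 0 \<le> B k" and s: "(\<Sum>k<d. B k) \<le> 1"
  shows "(\<Sum>k<d. B k * ln (x k)) \<le> ln ((\<Sum>k<d. B k * x k) + (1 - (\<Sum>k<d. B k)))"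
proof -
  define M where "M = (\<Sum>k<d. B k * x k) + (1 - (\<Sum>k<d. B k))"
  define e where "e = 1 - (\<Sum>k<d. B k)"
  have Mp: "M > 0" using row_pos[OF x B s] M_def by simp
  have ep: "e \<ge> 0" using s e_def by simp
  have 1: "B k * (ln (x k) - ln M) \<le> B k * (x k / M - 1)" if "k < d" for k
  proof -
    have "ln (x k / M) \<le> x k / M - 1" using x that Mp by (intro ln_le_minus_one) simp
    moreover have "ln (x k / M) = ln (x k) - ln M" by (rule ln_divide_pos) (use x that Mp in auto)
    ultimately have "ln (x k) - ln M \<le> x k / M - 1" by simp
    then show ?thesis using B that by (intro mult_left_mono) auto
  qed
  have 2: "e * (- ln M) \<le> e * (1 / M - 1)"
  proof -
    have "ln (1 / M) \<le> 1 / M - 1" using Mp by (intro ln_le_minus_one) simp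
    moreover have "ln (1 / M) = - ln M" using Mp by (simp add: ln_divide_pos)
    ultimately show ?thesis using ep by (intro mult_left_mono) auto
  qed
  have "(\<Sum>k<d. B k * (ln (x k) - ln M)) + e * (- ln M) \<le> (\<Sum>k<d. B k * (x k / M - 1)) + e * (1 / M - 1)"
    using 1 2 by (intro add_mono sum_mono) auto
  also have "\<dots> = ((\<Sum>k<d. B k * x k) + e) / M - ((\<Sum>k<d. B k) + e)"
    by (simp add: algebra_simps sum_subtractf sum_distrib_left sum_divide_distrib add_divide_distrib)
  also have "\<dots> = 0" using Mp by (simp add: M_def e_def)
  finally have "(\<Sum>k<d. B k * ln (x k)) - ((\<Sum>k<d. B k) + e) * ln M \<le> 0"
    by (simp add: algebra_simps sum_subtractf sum_distrib_left sum_distrib_right right_diff_distrib)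
  then show ?thesis by (simp add: e_def M_def)
qed

lemma amgm_prod:
  fixes x :: "nat \<Rightarrow> real" and B :: "nat \<Rightarrow> nat \<Rightarrow> real"
  assumes x: "\<forall>k<d. 0 \<le> x k \<and> x k \<le> 1" and B: "\<forall>j<m. \<forall>k<d. 0 \<le> B j k"
    and r: "\<forall>j<m. (\<Sum>k<d. B j k) \<le> 1" and c: "\<forall>k<d. (\<Sum>j<m. B j k) \<le> 1"
  shows "(\<Prod>k<d. x k) \<le> (\<Prod>j<m. (\<Sum>k<d. B j k * x k) + (1 - (\<Sum>k<d. B j k)))"
proof (cases "\<exists>k<d. x k = 0")
  case True
  then have "(\<Prod>k<d. x k) = 0" by (metis finite_lessThan lessThan_iff prod_zero_iff)
  moreover have nn: "(\<Sum>k<d. B j k * x k) + (1 - (\<Sum>k<d. B j k)) \<ge> 0" if "j < m" for j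
    using x B r that by (intro add_nonneg_nonneg sum_nonneg mult_nonneg_nonneg) auto
  moreover have "(\<Prod>j<m. (\<Sum>k<d. B j k * x k) + (1 - (\<Sum>k<d. B j k))) \<ge> 0"
    by (rule prod_nonneg) (use nn in auto)
  ultimately show ?thesis by linarith
next
  case False
  then have xp: "\<forall>k<d. 0 < x k \<and> x k \<le> 1" using x by (auto simp: less_le)
  define M where "M j = (\<Sum>k<d. B j k * x k) + (1 - (\<Sum>k<d. B j k))" for j
  have Mp: "M j > 0" if "j < m" for j unfolding M_def using row_pos[OF xp] B r that by auto
  have "ln (\<Prod>k<d. x k) = (\<Sum>k<d. ln (x k))" using xp by (subst ln_prod) auto
  also have "\<dots> \<le> (\<Sum>k<d. (\<Sum>j<m. B j k) * ln (x k))"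
  proof (rule sum_mono)
    fix k assume "k \<in> {..<d}"
    then have "ln (x k) \<le> 0" "(\<Sum>j<m. B j k) \<le> 1" using xp c by auto
    moreover have "(\<Sum>j<m. B j k) \<ge> 0" using B \<open>k \<in> {..<d}\<close> by (intro sum_nonneg) auto
    ultimately show "ln (x k) \<le> (\<Sum>j<m. B j k) * ln (x k)" by (smt (verit) mult_le_cancel_right1 mult.commute)
  qed
  also have "\<dots> = (\<Sum>j<m. \<Sum>k<d. B j k * ln (x k))"
    by (simp add: sum_distrib_right sum.swap[of _ "{..<m}"])
  also have "\<dots> \<le> (\<Sum>j<m. ln (M j))"
    unfolding M_def using row_ln[OF xp] B r by (intro sum_mono) auto
  also have "\<dots> = ln (\<Prod>j<m. M j)"
  proof -
    have Mne: "M j \<noteq> 0" if "j < m" for j using Mp[OF that] by simp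
    show ?thesis by (rule ln_prod[symmetric]) (simp_all add: Mne)
  qed
  finally have "ln (\<Prod>k<d. x k) \<le> ln (\<Prod>j<m. M j)" .
  moreover have "(\<Prod>k<d. x k) > 0" using xp by (intro prod_pos) auto
  moreover have "(\<Prod>j<m. M j) > 0" using Mp by (intro prod_pos) auto
  ultimately show ?thesis unfolding M_def by simp
qed



lemma of_real_cmod_sq: "complex_of_real ((cmod z)^2) = z * cnj z"
  by (rule complex_norm_square)
lemma of_real_cmod_sq2: "(complex_of_real (cmod z))^2 = z * cnj z"
  by (metis complex_norm_square of_real_power)

lemma orth_sum:
  fixes d :: nat
  assumes ortho: "\<forall>k<d. \<forall>l<d. k \<noteq> l \<longrightarrow> cinner (v k) (v l) = 0"
  shows "cinner (\<Sum>k<d. \<beta> k *s v k) (\<Sum>l<d. \<gamma> l *s v l) = (\<Sum>k<d. \<beta> k * cnj (\<gamma> k) * cinner (v k) (v k))"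
proof -
  have "cinner (\<Sum>k<d. \<beta> k *s v k) (\<Sum>l<d. \<gamma> l *s v l) = (\<Sum>k<d. \<beta> k * (\<Sum>l<d. cnj (\<gamma> l) * cinner (v k) (v l)))"
  proof -
    have "cinner (\<Sum>k<d. \<beta> k *s v k) (\<Sum>l<d. \<gamma> l *s v l) = (\<Sum>k<d. \<beta> k * cinner (v k) (\<Sum>l<d. \<gamma> l *s v l))"
      by (simp add: cinner_sum_left cinner_scale_left)
    also have "\<dots> = (\<Sum>k<d. \<beta> k * (\<Sum>l<d. cnj (\<gamma> l) * cinner (v k) (v l)))"
      by (simp add: cinner_sum_right cinner_scale_right)
    finally show ?thesis .
  qed
  also have "\<dots> = (\<Sum>k<d. \<beta> k * (\<Sum>l\<in>{k}. cnj (\<gamma> l) * cinner (v k) (v l)))"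
  proof (rule sum.cong[OF refl])
    fix k assume k: "k \<in> {..<d}"
    have "(\<Sum>l<d. cnj (\<gamma> l) * cinner (v k) (v l)) = (\<Sum>l\<in>{k}. cnj (\<gamma> l) * cinner (v k) (v l))"
      using ortho k by (intro sum.mono_neutral_right) auto
    then show "\<beta> k * (\<Sum>l<d. cnj (\<gamma> l) * cinner (v k) (v l)) = \<beta> k * (\<Sum>l\<in>{k}. cnj (\<gamma> l) * cinner (v k) (v l))"
      by simp
  qed
  finally show ?thesis by (simp add: mult.assoc)
qed


lemma ON_orth: "ON d u \<Longrightarrow> \<forall>k<d. \<forall>l<d. k \<noteq> l \<longrightarrow> cinner (u k) (u l) = 0"
  by (simp add: ON_def)

lemma bessel:
  assumes on: "ON d a"
  shows "(\<Sum>j<d. (cmod (cinner x (a j)))^2) \<le> (norm x)^2"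
proof -
  define \<beta> where "\<beta> j = cinner x (a j)" for j
  define f where "f = x - (\<Sum>j<d. \<beta> j *s a j)"
  define S where "S = (\<Sum>j<d. (cmod (\<beta> j))^2)"
  have S: "(\<Sum>j<d. \<beta> j * cnj (\<beta> j)) = complex_of_real S"
    by (simp add: S_def of_real_cmod_sq2)
  have 1: "cinner x (\<Sum>j<d. \<beta> j *s a j) = complex_of_real S"
    unfolding S[symmetric] by (simp add: cinner_sum_right cinner_scale_right \<beta>_def mult.commute)
  have 2: "cinner (\<Sum>j<d. \<beta> j *s a j) x = complex_of_real S"
    unfolding S[symmetric] by (simp add: cinner_sum_left cinner_scale_left \<beta>_def cinner_commute[of "a _" x])
  have 3: "cinner (\<Sum>j<d. \<beta> j *s a j) (\<Sum>j<d. \<beta> j *s a j) = complex_of_real S"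
    unfolding S[symmetric] orth_sum[OF ON_orth[OF on]] using on by (intro sum.cong) (auto simp: ON_def)
  have "cinner f f = cinner x x - complex_of_real S"
    unfolding f_def cinner_diff_left cinner_diff_right 1 2 3 by simp
  then have "complex_of_real ((norm f)^2) = complex_of_real ((norm x)^2 - S)"
    by (simp add: cinner_self)
  then have "(norm f)^2 = (norm x)^2 - S" using of_real_eq_iff by blast
  then show ?thesis unfolding S_def \<beta>_def by (smt (verit) zero_le_power2)
qed



lemma main_ineq:
  assumes pv: "principal_vectors P Q d p q" and P: "csubspace P" and Q: "csubspace Q"
    and dd: "cdim P \<le> d \<or> cdim Q \<le> d" and on: "ON d a" and aP: "\<forall>j<d. a j \<in> P"
  shows "\<exists>R. (\<forall>j<d. a j - R j \<in> Q \<and> (\<forall>y\<in>Q. cinner (R j) y = 0)) \<and>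
     (\<Prod>k<d. sqrt (1 - (cmod (cinner (p k) (q k)))^2)) \<le> (\<Prod>j<d. norm (R j))"
proof -
  define c where "c k = cinner (p k) (q k)" for k
  define \<alpha> where "\<alpha> j k = cinner (a j) (p k)" for j k
  define e where "e j = a j - (\<Sum>k<d. \<alpha> j k *s p k)" for j
  define r where "r = res p q"
  define R where "R j = (\<Sum>k<d. \<alpha> j k *s r k) + e j" for j
  have onp: "ON d p" using pv_ON[OF pv] by blast
  note pp = pv_props[OF pv]
  have eP: "e j \<in> P" if "j < d" for j unfolding e_def
    by (intro vec.subspace_diff[OF P] vec.subspace_sum[OF P] vec.subspace_scale[OF P])
       (use aP pp(1) that in auto)
  have ep: "cinner (e j) (p i) = 0" if "i < d" for i j
  proof -
    have "cinner (\<Sum>k<d. \<alpha> j k *s p k) (p i) = (\<Sum>k<d. \<alpha> j k * cinner (p k) (p i))"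
      by (simp add: cinner_sum_left cinner_scale_left)
    also have "\<dots> = (\<Sum>k\<in>{i}. \<alpha> j k * cinner (p k) (p i))"
      by (rule sum.mono_neutral_right) (use onp that in \<open>auto simp: ON_def\<close>)
    also have "\<dots> = \<alpha> j i" using onp that by (simp add: ON_def)
    finally show ?thesis by (simp add: e_def cinner_diff_left \<alpha>_def)
  qed
  have eQ: "cinner (e j) y = 0" if "j < d" "y \<in> Q" for j y
    using perp_P_perp_Q[OF pv P Q dd eP[OF that(1)] _ that(2)] ep by blast
  have rQ: "cinner (r k) y = 0" if "k < d" "y \<in> Q" for k y
    unfolding r_def using res_orth_Q[OF pv P Q that] .
  have re: "cinner (r k) (e j) = 0" if "k < d" "j < d" for k j
  proof -
    have "cinner (p k) (e j) = 0" using ep[of k j] that cz_sym by blast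
    moreover have "cinner (q k) (e j) = 0" using eQ[OF that(2) pp(2)[OF that(1)]] cz_sym by blast
    ultimately show ?thesis by (simp add: r_def res_def cinner_diff_left cinner_scale_left)
  qed
  have RQ: "\<forall>y\<in>Q. cinner (R j) y = 0" if "j < d" for j
    using rQ eQ that by (simp add: R_def cinner_add_left cinner_sum_left cinner_scale_left)
  have aR: "a j - R j \<in> Q" if "j < d" for j
  proof -
    have "a j - R j = (\<Sum>k<d. \<alpha> j k *s p k) - (\<Sum>k<d. \<alpha> j k *s r k)"
      by (simp add: R_def e_def)
    also have "\<dots> = (\<Sum>k<d. (\<alpha> j k * c k) *s q k)"
      by (simp add: r_def res_def c_def vector_ssub_ldistrib vector_smult_assoc sum_subtractf[symmetric])
    also have "\<dots> \<in> Q" by (intro vec.subspace_sum[OF Q] vec.subspace_scale[OF Q]) (use pp(2) in auto)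
    finally show ?thesis .
  qed
  define x where "x k = 1 - (cmod (c k))^2" for k
  define B where "B j k = (cmod (\<alpha> j k))^2" for j k
  have cle: "cmod (c k) \<le> 1" if "k < d" for k
    using cauchy_schwarz[of "p k" "q k"] unit_norm[OF pp(3)[OF that]] unit_norm[OF pp(4)[OF that]]
    by (simp add: c_def)
  have x01: "\<forall>k<d. 0 \<le> x k \<and> x k \<le> 1"
    using cle by (auto simp: x_def abs_le_square_iff power_le_one)
  have rr: "\<forall>k<d. \<forall>l<d. k \<noteq> l \<longrightarrow> cinner (r k) (r l) = 0" unfolding r_def using res_orth[OF pv P Q] by blast
  have rn: "cinner (r k) (r k) = complex_of_real (x k)" if "k < d" for k
    unfolding r_def using res_norm[OF pv P Q that] by (simp add: x_def c_def of_real_cmod_sq2)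
  have ee: "cinner (e j) (e j) = complex_of_real (1 - (\<Sum>k<d. B j k))" if j: "j < d" for j
  proof -
    have "cinner (e j) (e j) = cinner (e j) (a j)"
    proof -
      have aa: "e j + (\<Sum>k<d. \<alpha> j k *s p k) = a j" by (simp add: e_def)
      have "cinner (e j) (e j + (\<Sum>k<d. \<alpha> j k *s p k)) = cinner (e j) (e j) + (\<Sum>k<d. cnj (\<alpha> j k) * cinner (e j) (p k))"
        by (simp add: cinner_add_right cinner_sum_right cinner_scale_right)
      then show ?thesis using ep aa by simp
    qed
    also have "\<dots> = cinner (a j) (a j) - (\<Sum>k<d. \<alpha> j k * cinner (p k) (a j))"
      by (simp add: e_def cinner_diff_left cinner_sum_left cinner_scale_left)
    also have "\<dots> = 1 - (\<Sum>k<d. \<alpha> j k * cnj (\<alpha> j k))"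
      using on j by (simp add: ON_def \<alpha>_def cinner_commute[of "p _" "a j"])
    also have "\<dots> = complex_of_real (1 - (\<Sum>k<d. B j k))"
      by (simp add: B_def of_real_cmod_sq2)
    finally show ?thesis .
  qed
  have RR: "(norm (R j))^2 = (\<Sum>k<d. B j k * x k) + (1 - (\<Sum>k<d. B j k))" if j: "j < d" for j
  proof -
    have cross1: "cinner (\<Sum>k<d. \<alpha> j k *s r k) (e j) = 0"
      using re j by (simp add: cinner_sum_left cinner_scale_left)
    have cross2: "cinner (e j) (\<Sum>k<d. \<alpha> j k *s r k) = 0" using cross1 cz_sym by blast
    have "cinner (R j) (R j) = cinner (\<Sum>k<d. \<alpha> j k *s r k) (\<Sum>k<d. \<alpha> j k *s r k) + cinner (e j) (e j)"
      by (simp add: R_def cinner_add_left cinner_add_right cross1 cross2)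
    also have "cinner (\<Sum>k<d. \<alpha> j k *s r k) (\<Sum>k<d. \<alpha> j k *s r k) = (\<Sum>k<d. \<alpha> j k * cnj (\<alpha> j k) * complex_of_real (x k))"
      unfolding orth_sum[OF rr] using rn by simp
    also have "\<dots> = complex_of_real (\<Sum>k<d. B j k * x k)"
      by (simp add: B_def of_real_cmod_sq2)
    finally have "cinner (R j) (R j) = complex_of_real ((\<Sum>k<d. B j k * x k) + (1 - (\<Sum>k<d. B j k)))"
      using ee[OF j] by simp
    then show ?thesis using cinner_self[of "R j"] of_real_eq_iff by metis
  qed
  have Bn: "\<forall>j<d. \<forall>k<d. 0 \<le> B j k" by (simp add: B_def)
  have rows: "\<forall>j<d. (\<Sum>k<d. B j k) \<le> 1"
  proof (intro allI impI)
    fix j assume j: "j < d"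
    have "(\<Sum>k<d. B j k) \<le> (norm (a j))^2" unfolding B_def \<alpha>_def by (rule bessel[OF onp])
    also have "\<dots> = 1"
    proof -
      have "cinner (a j) (a j) = 1" using on j by (simp add: ON_def)
      then show ?thesis using unit_norm[of "a j"] by simp
    qed
    finally show "(\<Sum>k<d. B j k) \<le> 1" .
  qed
  have cols: "\<forall>k<d. (\<Sum>j<d. B j k) \<le> 1"
  proof (intro allI impI)
    fix k assume k: "k < d"
    have "(\<Sum>j<d. B j k) = (\<Sum>j<d. (cmod (cinner (p k) (a j)))^2)"
      unfolding B_def \<alpha>_def by (simp add: cmod_cinner_commute)
    also have "\<dots> \<le> (norm (p k))^2" by (rule bessel[OF on])
    also have "\<dots> = 1" using unit_norm[OF pp(3)[OF k]] by simp
    finally show "(\<Sum>j<d. B j k) \<le> 1" .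
  qed
  have "(\<Prod>k<d. x k) \<le> (\<Prod>j<d. (norm (R j))^2)"
    using amgm_prod[OF x01 Bn rows cols] RR by simp
  moreover have "(\<Prod>k<d. sqrt (x k))^2 = (\<Prod>k<d. x k)"
    unfolding prod_power_distrib by (rule prod.cong) (use x01 in auto)
  moreover have "(\<Prod>j<d. norm (R j))^2 = (\<Prod>j<d. (norm (R j))^2)"
    by (rule prod_power_distrib)
  ultimately have "(\<Prod>k<d. sqrt (x k))^2 \<le> (\<Prod>j<d. norm (R j))^2" by simp
  then have "(\<Prod>k<d. sqrt (x k)) \<le> (\<Prod>j<d. norm (R j))"
    by (rule power2_le_imp_le) (simp add: prod_nonneg)
  then show ?thesis using aR RQ unfolding x_def c_def by blast
qed



lemma sin_aux_val:
  assumes X: "csubspace X" and Y: "csubspace Y" and le: "cdim X \<le> cdim Y"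
  shows "\<exists>u w. principal_vectors X Y (cdim X) u w \<and>
     sin_prod_aux X Y = (\<Prod>k<cdim X. sqrt (1 - (cmod (cinner (u k) (w k)))^2))"
proof -
  have "\<exists>u w. principal_vectors X Y (cdim X) u w" using pv_exists[OF X Y] le by simp
  then have ex: "\<exists>uw. principal_vectors X Y (cdim X) (fst uw) (snd uw)" by simp
  define uw where "uw = (SOME uw. principal_vectors X Y (cdim X) (fst uw) (snd uw))"
  have pv: "principal_vectors X Y (cdim X) (fst uw) (snd uw)"
    unfolding uw_def using someI_ex[OF ex] .
  have "sin_prod_aux X Y = (\<Prod>k<cdim X. sin (arccos (cmod (cinner (fst uw k) (snd uw k)))))"
    unfolding sin_prod_aux_def Let_def uw_def by simp
  also have "\<dots> = (\<Prod>k<cdim X. sqrt (1 - (cmod (cinner (fst uw k) (snd uw k)))^2))"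
  proof (rule prod.cong[OF refl])
    fix k assume k: "k \<in> {..<cdim X}"
    note pp = pv_props[OF pv, of k]
    have "cmod (cinner (fst uw k) (snd uw k)) \<le> 1"
      using cauchy_schwarz[of "fst uw k" "snd uw k"] unit_norm[of "fst uw k"] unit_norm[of "snd uw k"] pp k by auto
    then show "sin (arccos (cmod (cinner (fst uw k) (snd uw k)))) = sqrt (1 - (cmod (cinner (fst uw k) (snd uw k)))^2)"
      by (intro sin_arccos) (auto intro: order_trans[OF _ norm_ge_zero])
  qed
  finally show ?thesis using pv by blast
qed

lemma cdim_sing: "x \<noteq> 0 \<Longrightarrow> cdim (vec.span {x}) = 1"
  by (simp add: vec.dim_insert)

lemma sin_vec_lower:
  assumes Q: "csubspace Q" and x: "cinner x x = 1" and y: "y \<noteq> 0" "y \<in> Q"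
    and R: "x - R \<in> Q" "\<forall>z\<in>Q. cinner R z = 0"
  shows "norm R \<le> sin_vec x y"
proof -
  have x0: "x \<noteq> 0" using x by auto
  have S1: "csubspace (vec.span {x})" "csubspace (vec.span {y})" by (simp_all add: vec.subspace_span)
  have dims: "cdim (vec.span {x}) \<le> cdim (vec.span {y})" using cdim_sing x0 y by simp
  obtain u w where pv: "principal_vectors (vec.span {x}) (vec.span {y}) 1 u w"
    and val: "sin_prod_aux (vec.span {x}) (vec.span {y}) = (\<Prod>k<1. sqrt (1 - (cmod (cinner (u k) (w k)))^2))"
    using sin_aux_val[OF S1 dims] cdim_sing[OF x0] by auto
  have sv: "sin_vec x y = sqrt (1 - (cmod (cinner (u 0) (w 0)))^2)"
    unfolding sin_vec_def sin_subspaces_def using dims val by simp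
  note pp = pv_props[OF pv, of 0]
  obtain lam where l: "u 0 = lam *s x" using pp(1) vec.span_singleton by auto
  have "cinner (u 0) (u 0) = lam * cnj lam" using x by (simp add: l cinner_scale_left cinner_scale_right)
  then have "complex_of_real ((cmod lam)^2) = 1" using pp(3) of_real_cmod_sq[of lam] by simp
  then have "(cmod lam)^2 = 1" by (metis of_real_eq_1_iff)
  then have lm: "cmod lam = 1" using norm_ge_zero[of lam] by (auto simp: power2_eq_1_iff)
  have wQ: "w 0 \<in> Q" using pp(2) vec.span_minimal[of "{y}" Q] Q y by auto
  have w1: "norm (w 0) = 1" using unit_norm[OF pp(4)] by simp
  have "cinner (u 0) (w 0) = lam * cinner x (w 0)" by (simp add: l cinner_scale_left)
  moreover have "cinner x (w 0) = cinner (x - R) (w 0)" using R wQ by (simp add: cinner_diff_left)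
  ultimately have "cmod (cinner (u 0) (w 0)) = cmod (cinner (x - R) (w 0))" using lm by (simp add: norm_mult)
  also have "\<dots> \<le> norm (x - R)" using cauchy_schwarz[of "x - R" "w 0"] w1 by simp
  finally have c1: "cmod (cinner (u 0) (w 0)) \<le> norm (x - R)" .
  have "cinner R (x - R) = 0" "cinner (x - R) R = 0" using R cz_sym by auto
  then have "cinner x x = cinner (x - R) (x - R) + cinner R R"
    by (simp add: cinner_diff_left cinner_diff_right algebra_simps)
  then have "complex_of_real 1 = complex_of_real ((norm (x - R))^2 + (norm R)^2)" using x by (simp add: cinner_self)
  then have py: "(norm (x - R))^2 + (norm R)^2 = 1" using of_real_eq_iff by metis
  have "(cmod (cinner (u 0) (w 0)))^2 \<le> (norm (x - R))^2" using c1 by (intro power_mono) auto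
  then have "(norm R)^2 \<le> 1 - (cmod (cinner (u 0) (w 0)))^2" using py by linarith
  then have "sqrt ((norm R)^2) \<le> sqrt (1 - (cmod (cinner (u 0) (w 0)))^2)" by (rule real_sqrt_le_mono)
  then show ?thesis using sv by simp
qed

theorem lemma2:
  fixes A B :: "(complex ^ 'n) set"
    and a b :: nat
    and av bv :: "nat \<Rightarrow> complex ^ 'n"
  assumes "csubspace A" and "csubspace B"
    and "cdim A = a" and "cdim B = b"
    and "\<forall>i<a. \<forall>j<a. cinner (av i) (av j) = (if i = j then 1 else 0)"
    and "vec.span (av ` {..<a}) = A"
    and "inj_on bv {..<b}" and "vec.independent (bv ` {..<b})"
    and "vec.span (bv ` {..<b}) = B"
  shows "sin_subspaces A B \<le> (\<Prod>j<min a b. sin_vec (av j) (bv j))"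
proof -
  note A = assms(1) and B = assms(2)
  have onA: "ON a av" using assms(5) by (simp add: ON_def)
  have avA: "\<forall>j<a. av j \<in> A"
  proof (intro allI impI)
    fix j assume "j < a"
    then have "av j \<in> vec.span (av ` {..<a})" by (intro vec.span_base) simp
    then show "av j \<in> A" using assms(6) by simp
  qed
  have bvB: "\<forall>j<b. bv j \<in> B"
  proof (intro allI impI)
    fix j assume "j < b"
    then have "bv j \<in> vec.span (bv ` {..<b})" by (intro vec.span_base) simp
    then show "bv j \<in> B" using assms(9) by simp
  qed
  have bv0: "\<forall>j<b. bv j \<noteq> 0"
  proof (intro allI impI notI)
    fix j assume "j < b" "bv j = 0"
    then have "0 \<in> bv ` {..<b}" by (metis imageI lessThan_iff)
    then have "vec.dependent (bv ` {..<b})" by (rule vec.dependent_zero)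
    then show False using assms(8) by simp
  qed
  have fin: "\<And>d P Q p q. principal_vectors P Q d p q \<Longrightarrow> csubspace P \<Longrightarrow> csubspace Q \<Longrightarrow>
      (cdim P \<le> d \<or> cdim Q \<le> d) \<Longrightarrow> d \<le> a \<Longrightarrow> d \<le> b \<Longrightarrow> P = A \<Longrightarrow> Q = B \<Longrightarrow>
      (\<Prod>k<d. sqrt (1 - (cmod (cinner (p k) (q k)))^2)) \<le> (\<Prod>j<d. sin_vec (av j) (bv j))"
  proof -
    fix d P Q p q
    assume pv: "principal_vectors P Q d p q" and P: "csubspace P" and Q: "csubspace Q"
      and dd: "cdim P \<le> d \<or> cdim Q \<le> d" and da: "d \<le> a" and db: "d \<le> b" and PA: "P = A" and QB: "Q = B"
    have on: "ON d av" using onA da by (simp add: ON_def)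
    obtain R where R: "\<forall>j<d. av j - R j \<in> Q \<and> (\<forall>y\<in>Q. cinner (R j) y = 0)"
      and ineq: "(\<Prod>k<d. sqrt (1 - (cmod (cinner (p k) (q k)))^2)) \<le> (\<Prod>j<d. norm (R j))"
      using main_ineq[OF pv P Q dd on] avA da PA by auto
    have "(\<Prod>j<d. norm (R j)) \<le> (\<Prod>j<d. sin_vec (av j) (bv j))"
    proof (rule prod_mono)
      fix j assume j: "j \<in> {..<d}"
      show "0 \<le> norm (R j) \<and> norm (R j) \<le> sin_vec (av j) (bv j)"
        using sin_vec_lower[OF Q, of "av j" "bv j" "R j"] R j onA da db bv0 bvB QB
        by (auto simp: ON_def)
    qed
    then show "(\<Prod>k<d. sqrt (1 - (cmod (cinner (p k) (q k)))^2)) \<le> (\<Prod>j<d. sin_vec (av j) (bv j))"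
      using ineq by linarith
  qed
  show ?thesis
  proof (cases "a \<le> b")
    case True
    obtain u w where pv: "principal_vectors A B a u w"
      and val: "sin_prod_aux A B = (\<Prod>k<a. sqrt (1 - (cmod (cinner (u k) (w k)))^2))"
      using sin_aux_val[OF A B] assms(3,4) True by auto
    have "sin_subspaces A B = sin_prod_aux A B" using True assms(3,4) by (simp add: sin_subspaces_def)
    then show ?thesis using val fin[OF pv A B _ _ True] True assms(3) by simp
  next
    case False
    obtain u w where pv: "principal_vectors B A b u w"
      and val: "sin_prod_aux B A = (\<Prod>k<b. sqrt (1 - (cmod (cinner (u k) (w k)))^2))"
      using sin_aux_val[OF B A] assms(3,4) False by auto
    have "sin_subspaces A B = sin_prod_aux B A" using False assms(3,4) by (simp add: sin_subspaces_def)
    moreover have "(\<Prod>k<b. sqrt (1 - (cmod (cinner (u k) (w k)))^2)) = (\<Prod>k<b. sqrt (1 - (cmod (cinner (w k) (u k)))^2))"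
      by (simp add: cmod_cinner_commute)
    ultimately show ?thesis using val fin[OF pv_swap[OF pv] A B] False assms(4) by simp
  qed
qed

end
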